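(* Let $\mathfrak{t},\mathfrak{w}$ be sesquilinear forms on $\mathbb{C}^n$ with $\mathfrak{w}\geq0$. (i) The following are equivalent: (a) $\mathfrak{t}$ is $\mathfrak{w}$-left bounded; (b) $\mathfrak{t}$ is $\mathfrak{w}$-left regular; (c) $\ker(\mathfrak{w})\subseteq\ker(\mathfrak{t})$. (ii) $\mathfrak{t}$ is $\mathfrak{w}$-left strongly singular if and only if $\ker(\mathfrak{w})+\ker(\mathfrak{t})=\mathbb{C}^n$.
   Context: A sesquilinear form on a complex vector space $\mathcal{D}$ is a map $\mathfrak{t}:\mathcal{D}\times\mathcal{D}\to\mathbb{C}$, linear in the first and anti-linear in the second variable; write $\mathfrak{t}[f]=\mathfrak{t}(f,f)$; it is non-negative ($\mathfrak{t}\geq0$) if $\mathfrak{t}[f]\geq0$ for all $f$. $\ker(\mathfrak{t}):=\{f\in\mathcal{D}:\mathfrak{t}(f,g)=0\ \forall g\in\mathcal{D}\}$. For non-negative forms $\mathfrak{u},\mathfrak{w}$: $\mathfrak{u}$ is $\mathfrak{w}$-absolutely continuous if $\mathfrak{w}[f_n]\to0$ and $\mathfrak{u}[f_n-f_m]\to0$ imply $\mathfrak{u}[f_n]\to0$; $\mathfrak{u}$ is $\mathfrak{w}$-singular if for every $f$ there is $\{f_n\}$ with $\mathfrak{w}[f_n]\to0$ and $\mathfrak{u}[f-f_n]\to0$. $M_l(\mathfrak{t})$ is the set of non-negative forms $\mathfrak{s}_1$ for which there is a non-negative form $\mathfrak{s}_2$ with $|\mathfrak{t}(f,g)|\leq\mathfrak{s}_1[f]^{1/2}\mathfrak{s}_2[g]^{1/2}$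 for all $f,g$. $\mathfrak{t}$ is $\mathfrak{w}$-left bounded if $C\mathfrak{w}\in M_l(\mathfrak{t})$ for some $C>0$; $\mathfrak{w}$-left regular if some $\mathfrak{s}_1\in M_l(\mathfrak{t})$ is $\mathfrak{w}$-absolutely continuous; $\mathfrak{w}$-left strongly singular if some $\mathfrak{s}_1\in M_l(\mathfrak{t})$ is $\mathfrak{w}$-singular. *)

theory Defs
  imports "HOL-Analysis.Analysis"
begin

text \<open>The space C^n is modelled as complex ^ 'n for an arbitrary finite index type 'n,
  with complex scalar multiplication given by the componentwise scalar product (*s).\<close>

type_synonym 'n form = "complex ^ 'n \<Rightarrow> complex ^ 'n \<Rightarrow> complex"

definition sesquilinear :: "'n::finite form \<Rightarrow> bool" where
  "sesquilinear t \<longleftrightarrow>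
     (\<forall>f g h. t (f + g) h = t f h + t g h) \<and>
     (\<forall>c f h. t (c *s f) h = c * t f h) \<and>
     (\<forall>f g h. t f (g + h) = t f g + t f h) \<and>
     (\<forall>c f g. t f (c *s g) = cnj c * t f g)"

definition nonneg_form :: "'n::finite form \<Rightarrow> bool" where
  "nonneg_form t \<longleftrightarrow> sesquilinear t \<and> (\<forall>f. t f f \<in> \<real> \<and> 0 \<le> Re (t f f))"

definition form_ker :: "'n::finite form \<Rightarrow> (complex ^ 'n) set" where
  "form_ker t = {f. \<forall>g. t f g = 0}"

definition abs_continuous :: "'n::finite form \<Rightarrow> 'n form \<Rightarrow> bool" where
  "abs_continuous u w \<longleftrightarrow>
     (\<forall>fs :: nat \<Rightarrow> complex ^ 'n.
        (\<lambda>k. w (fs k) (fs k)) \<longlonglongrightarrow> 0 \<longrightarrow>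
        (\<forall>e>0. \<exists>N. \<forall>k\<ge>N. \<forall>m\<ge>N. norm (u (fs k - fs m) (fs k - fs m)) < e) \<longrightarrow>
        (\<lambda>k. u (fs k) (fs k)) \<longlonglongrightarrow> 0)"

definition singular_form :: "'n::finite form \<Rightarrow> 'n form \<Rightarrow> bool" where
  "singular_form u w \<longleftrightarrow>
     (\<forall>f. \<exists>fs :: nat \<Rightarrow> complex ^ 'n.
        (\<lambda>k. w (fs k) (fs k)) \<longlonglongrightarrow> 0 \<and>
        (\<lambda>k. u (f - fs k) (f - fs k)) \<longlonglongrightarrow> 0)"

definition Ml :: "'n::finite form \<Rightarrow> 'n form set" where
  "Ml t = {s1. nonneg_form s1 \<and> (\<exists>s2. nonneg_form s2 \<and>
      (\<forall>f g. norm (t f g) \<le> sqrt (Re (s1 f f)) * sqrt (Re (s2 g g))))}"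

definition left_bounded :: "'n::finite form \<Rightarrow> 'n form \<Rightarrow> bool" where
  "left_bounded t w \<longleftrightarrow> (\<exists>C::real. C > 0 \<and> (\<lambda>f g. complex_of_real C * w f g) \<in> Ml t)"

definition left_regular :: "'n::finite form \<Rightarrow> 'n form \<Rightarrow> bool" where
  "left_regular t w \<longleftrightarrow> (\<exists>s1\<in>Ml t. abs_continuous s1 w)"

definition left_strongly_singular :: "'n::finite form \<Rightarrow> 'n form \<Rightarrow> bool" where
  "left_strongly_singular t w \<longleftrightarrow> (\<exists>s1\<in>Ml t. singular_form s1 w)"

end

theory Submission imports Defs begin

lemma scaleR_vec_smult: "r *\<^sub>R (x::complex^'n) = complex_of_real r *s x"
  by (simp add: vec_eq_iff complex_eq_iff)

lemma sesq_zero: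
  assumes "sesquilinear t" shows "t 0 g = 0" "t f 0 = 0"
proof -
  have "t (0+0) g = t 0 g + t 0 g" using assms unfolding sesquilinear_def by blast
  then show "t 0 g = 0" by simp
  have "t f (0+0) = t f 0 + t f 0" using assms unfolding sesquilinear_def by blast
  then show "t f 0 = 0" by simp
qed

lemma sesq_diff:
  assumes "sesquilinear t" shows "t (f - g) h = t f h - t g h" "t h (f - g) = t h f - t h g"
proof -
  have "t ((f-g)+g) h = t (f-g) h + t g h" using assms unfolding sesquilinear_def by blast
  then show "t (f - g) h = t f h - t g h" by simp
  have "t h ((f-g)+g) = t h (f-g) + t h g" using assms unfolding sesquilinear_def by blast
  then show "t h (f - g) = t h f - t h g" by simp
qed

lemma sesq_add:
  assumes "sesquilinear t" shows "t (f + g) h = t f h + t g h" "t h (f + g) = t h f + t h g"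
  using assms unfolding sesquilinear_def by blast+

lemma sesq_smult:
  assumes "sesquilinear t" shows "t (c *s f) h = c * t f h" "t h (c *s f) = cnj c * t h f"
  using assms unfolding sesquilinear_def by blast+

lemma sesq_bilinear:
  assumes "sesquilinear t" shows "bilinear t"
  unfolding bilinear_def
proof safe
  fix x show "linear (t x)"
    by (rule linearI) (simp_all add: sesq_add[OF assms] sesq_smult[OF assms] scaleR_vec_smult scaleR_conv_of_real)
next
  fix y show "linear (\<lambda>x. t x y)"
    by (rule linearI) (simp_all add: sesq_add[OF assms] sesq_smult[OF assms] scaleR_vec_smult scaleR_conv_of_real)
qed

lemma sesq_bounded:
  assumes "sesquilinear t" shows "\<exists>K>0. \<forall>f g. norm (t f g) \<le> norm f * norm g * K"
  using bounded_bilinear.pos_bounded[OF sesq_bilinear[OF assms, unfolded bilinear_conv_bounded_bilinear]]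
  by blast

lemma hermitian:
  assumes "nonneg_form w" shows "w g f = cnj (w f g)"
proof -
  have s: "sesquilinear w" using assms nonneg_form_def by blast
  have R: "\<And>h. Im (w h h) = 0" using assms unfolding nonneg_form_def by (auto simp: complex_is_Real_iff)
  have e1: "w (f+g) (f+g) = w f f + w g g + w f g + w g f" by (simp add: sesq_add[OF s])
  have e2: "w (f + \<i> *s g) (f + \<i> *s g) = w f f + w g g - \<i> * w f g + \<i> * w g f"
    by (simp add: sesq_add[OF s] sesq_smult[OF s] algebra_simps)
  have a: "Im (w f g) + Im (w g f) = 0" using R[of "f+g"] R[of f] R[of g] e1 by simp
  have b: "Re (w g f) - Re (w f g) = 0" using R[of "f+\<i> *s g"] R[of f] R[of g] e2 by simp
  show ?thesis using a b by (simp add: complex_eq_iff)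
qed

lemma ker_of_zero:
  assumes "nonneg_form w" "Re (w f f) = 0" shows "f \<in> form_ker w"
  unfolding form_ker_def
proof safe
  fix g
  have s: "sesquilinear w" using assms nonneg_form_def by blast
  define z where "z = w f g"
  define W where "W = Re (w g g)"
  have W0: "W \<ge> 0" using assms(1) unfolding nonneg_form_def W_def by blast
  define sc where "sc = 1 / (1 + W)"
  have sc0: "sc > 0" using W0 sc_def by simp
  have scW: "sc * W < 1" using W0 by (simp add: sc_def field_simps)
  define c where "c = - complex_of_real sc * z"
  have h: "w g f = cnj z" using hermitian[OF assms(1), of g f] z_def by simp
  have zz: "z * cnj z = of_real ((cmod z)^2)" using complex_norm_square by metis
  have zz': "z * cnj z = (of_real (cmod z))^2" using zz by simp
  have e: "w (f + c *s g) (f + c *s g) = (w f f + w f (c *s g)) + (w (c *s g) f + w (c *s g) (c *s g))"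
    by (simp only: sesq_add[OF s] add_ac)
  also have "\<dots> = (w f f + cnj c * z) + (c * cnj z + c * (cnj c * w g g))"
    by (simp only: sesq_smult[OF s] h z_def mult_ac)
  finally have e: "w (f + c *s g) (f + c *s g) = (w f f + cnj c * z) + (c * cnj z + c * (cnj c * w g g))" .
  have c1: "cnj c * z = of_real (- sc * (cmod z)^2)"
    unfolding c_def using zz' by (simp add: algebra_simps)
  have c2: "c * cnj z = of_real (- sc * (cmod z)^2)"
    unfolding c_def using zz' by (simp add: algebra_simps)
  have c3: "c * (cnj c * w g g) = of_real (sc^2 * (cmod z)^2) * w g g"
    unfolding c_def using zz' by (simp add: algebra_simps power2_eq_square)
  have "0 \<le> Re (w (f + c *s g) (f + c *s g))" using assms(1) unfolding nonneg_form_def by blast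
  also have "\<dots> = - 2 * sc * (cmod z)^2 + sc^2 * (cmod z)^2 * W"
    unfolding e c1 c2 c3 using assms(2) by (simp add: W_def)
  finally have "0 \<le> sc * (cmod z)^2 * (sc * W - 2)" by (simp add: algebra_simps power2_eq_square)
  moreover have "sc * W - 2 < 0" using scW by simp
  ultimately have "sc * (cmod z)^2 \<le> 0" using mult_pos_neg[of "sc*(cmod z)^2" "sc*W-2"] by linarith
  then have "cmod z = 0" using sc0 by (simp add: mult_le_0_iff)
  then show "w f g = 0" using z_def by simp
qed

lemma ker_subspace: assumes "sesquilinear w" shows "subspace (form_ker w)"
  unfolding subspace_def form_ker_def
  by (simp add: sesq_zero[OF assms] sesq_add[OF assms] sesq_smult[OF assms] scaleR_vec_smult)

lemma nonneg_sesq: "nonneg_form w \<Longrightarrow> sesquilinear w" unfolding nonneg_form_def by blast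
lemma nonneg_Re: "nonneg_form w \<Longrightarrow> 0 \<le> Re (w f f)" unfolding nonneg_form_def by blast

lemma coercive:
  assumes "nonneg_form w"
  shows "\<exists>m>0. \<forall>f. \<exists>a\<in>form_ker w. m * (norm (f - a))^2 \<le> Re (w f f)"
proof -
  have s: "sesquilinear w" using assms nonneg_sesq by blast
  let ?N = "form_ker w"
  have sub: "subspace ?N" using ker_subspace[OF s] .
  have decomp: "\<exists>a\<in>?N. \<exists>r. f = a + r \<and> (\<forall>b\<in>?N. orthogonal r b)" for f
  proof -
    obtain y z where "y \<in> span ?N" "\<And>b. b \<in> span ?N \<Longrightarrow> orthogonal z b" "f = y + z"
      using orthogonal_subspace_decomp_exists[of ?N f] by metis
    moreover have "span ?N = ?N" using sub by simp
    ultimately show ?thesis by auto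
  qed
  have wsplit: "w (a + r) (a + r) = w r r" if "a \<in> ?N" for a r
  proof -
    have "w a x = 0" for x using that unfolding form_ker_def by blast
    moreover have "w r a = cnj (w a r)" using hermitian[OF assms, of r a] by simp
    ultimately show ?thesis by (simp add: sesq_add[OF s])
  qed
  define S where "S = {r. norm r = 1 \<and> (\<forall>b\<in>?N. orthogonal r b)}"
  have Spos: "Re (w r r) > 0" if "r \<in> S" for r
  proof (rule ccontr)
    assume "\<not> Re (w r r) > 0"
    then have "Re (w r r) = 0" using nonneg_Re[OF assms, of r] by linarith
    then have "r \<in> ?N" using ker_of_zero[OF assms] by blast
    then have "orthogonal r r" using that S_def by blast
    then have "r = 0" by (simp add: orthogonal_def)
    then show False using that S_def by simp
  qed
  have scal: "Re (w (c *\<^sub>R r) (c *\<^sub>R r)) = c^2 * Re (w r r)" for c r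
    by (simp add: scaleR_vec_smult sesq_smult[OF s] power2_eq_square)
  obtain m where m0: "m > 0" and mS: "\<And>r. r \<in> S \<Longrightarrow> m \<le> Re (w r r)"
  proof (cases "S = {}")
    case True then show ?thesis using that[of 1] by simp
  next
    case False
    have "S = sphere 0 1 \<inter> (\<Inter>b\<in>?N. {x. b \<bullet> x = 0})"
      unfolding S_def by (auto simp: orthogonal_def inner_commute)
    then have "compact S"
      by (simp add: compact_eq_bounded_closed closed_Int closed_INT closed_hyperplane bounded_Int)
    moreover have "continuous_on S (\<lambda>r. Re (w r r))"
      using sesq_bilinear[OF s, unfolded bilinear_conv_bounded_bilinear]
      by (intro continuous_on_Re bounded_bilinear.continuous_on[of w] continuous_on_id)
    ultimately obtain x0 where "x0 \<in> S" "\<forall>y\<in>S. Re (w x0 x0) \<le> Re (w y y)"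
      using continuous_attains_inf[of S "\<lambda>r. Re (w r r)"] False by blast
    then show ?thesis using that[of "Re (w x0 x0)"] Spos by blast
  qed
  have "\<exists>a\<in>?N. m * (norm (f - a))^2 \<le> Re (w f f)" for f
  proof -
    obtain a r where a: "a \<in> ?N" and f: "f = a + r" and o: "\<forall>b\<in>?N. orthogonal r b"
      using decomp[of f] by blast
    have wf: "w f f = w r r" using wsplit[OF a] f by simp
    show ?thesis
    proof (cases "r = 0")
      case True then show ?thesis using a f nonneg_Re[OF assms, of f] by (intro bexI[of _ a]) auto
    next
      case False
      define r' where "r' = (1 / norm r) *\<^sub>R r"
      have "r' \<in> S" unfolding S_def r'_def using False o
        by (auto simp: orthogonal_def)
      then have "m \<le> Re (w r' r')" using mS by blast
      also have "\<dots> = (1 / norm r)^2 * Re (w r r)" unfolding r'_def scal ..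
      finally have "m * (norm r)^2 \<le> Re (w r r)" using False
        by (simp add: field_simps)
      then show ?thesis using a f wf by (intro bexI[of _ a]) auto
    qed
  qed
  then show ?thesis using m0 by blast
qed

lemma sesq_sum_right:
  assumes "sesquilinear t" "finite A" shows "t f (\<Sum>j\<in>A. h j) = (\<Sum>j\<in>A. t f (h j))"
  using assms(2) by (induction A rule: finite_induct) (simp_all add: sesq_zero[OF assms(1)] sesq_add[OF assms(1)])

lemma sesq_expand_right:
  assumes "sesquilinear t" shows "t f g = (\<Sum>j\<in>UNIV. cnj (g$j) * t f (axis j 1))"
proof -
  have "t f g = t f (\<Sum>j\<in>UNIV. g$j *s axis j 1)" by (simp add: basis_expansion)
  also have "\<dots> = (\<Sum>j\<in>UNIV. cnj (g$j) * t f (axis j 1))"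
    by (simp add: sesq_sum_right[OF assms] sesq_smult[OF assms])
  finally show ?thesis .
qed

definition std :: "'n::finite form" where
  "std g g' = (\<Sum>j\<in>UNIV. g$j * cnj (g'$j))"

definition uform :: "'n::finite form \<Rightarrow> 'n form" where
  "uform t f f' = (\<Sum>j\<in>UNIV. t f (axis j 1) * cnj (t f' (axis j 1)))"

lemma sum_cnj_real: "(\<Sum>j\<in>A. z j * cnj (z j)) = of_real (\<Sum>j\<in>A. (cmod (z j))^2)"
  by (simp only: of_real_sum complex_norm_square)

lemma std_nonneg: "nonneg_form (std :: 'n::finite form)"
  unfolding nonneg_form_def sesquilinear_def std_def
  by (simp add: sum.distrib sum_distrib_left algebra_simps sum_cnj_real sum_nonneg)

lemma std_Re: "Re (std g g) = (norm g)^2"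
proof -
  have "Re (std g g) = (\<Sum>j\<in>UNIV. (cmod (g$j))^2)" unfolding std_def sum_cnj_real by simp
  also have "\<dots> = (norm g)^2" unfolding norm_vec_def L2_set_def
    by (simp add: sum_nonneg)
  finally show ?thesis .
qed

lemma uform_nonneg: assumes "sesquilinear t" shows "nonneg_form (uform t)"
  unfolding nonneg_form_def sesquilinear_def uform_def
  by (simp add: sesq_add[OF assms] sesq_smult[OF assms] sum.distrib sum_distrib_left algebra_simps sum_cnj_real sum_nonneg)

lemma uform_Re: "Re (uform t f f) = (\<Sum>j\<in>UNIV. (cmod (t f (axis j 1)))^2)"
  unfolding uform_def sum_cnj_real by simp

lemma uform_bound:
  assumes "sesquilinear t"
  shows "norm (t f g) \<le> sqrt (Re (uform t f f)) * sqrt (Re (std g g))"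
proof -
  have "norm (t f g) = norm (\<Sum>j\<in>UNIV. cnj (g$j) * t f (axis j 1))"
    using sesq_expand_right[OF assms] by metis
  also have "\<dots> \<le> (\<Sum>j\<in>UNIV. \<bar>cmod (t f (axis j 1))\<bar> * \<bar>cmod (g$j)\<bar>)"
    by (rule order_trans[OF norm_sum]) (simp add: norm_mult mult.commute)
  also have "\<dots> \<le> L2_set (\<lambda>j. cmod (t f (axis j 1))) UNIV * L2_set (\<lambda>j. cmod (g$j)) UNIV"
    by (rule L2_set_mult_ineq)
  also have "\<dots> = sqrt (Re (uform t f f)) * sqrt (Re (std g g))"
    unfolding uform_Re std_Re by (simp add: L2_set_def[of "\<lambda>j. cmod (t f (axis j 1))"] norm_vec_def[symmetric])
  finally show ?thesis .
qed

lemma a_imp_b: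
  assumes "left_bounded t w" shows "left_regular t w"
proof -
  obtain C :: real where C: "C > 0" "(\<lambda>f g. complex_of_real C * w f g) \<in> Ml t"
    using assms unfolding left_bounded_def by blast
  have "abs_continuous (\<lambda>f g. complex_of_real C * w f g) w"
    unfolding abs_continuous_def by (auto intro: tendsto_mult_right_zero)
  then show ?thesis unfolding left_regular_def using C by blast
qed

lemma b_imp_c:
  assumes "left_regular t w" "sesquilinear t" "nonneg_form w"
  shows "form_ker w \<subseteq> form_ker t"
proof
  fix f assume f: "f \<in> form_ker w"
  obtain s1 where s1: "s1 \<in> Ml t" "abs_continuous s1 w"
    using assms(1) unfolding left_regular_def by blast
  obtain s2 where s2: "\<forall>f g. norm (t f g) \<le> sqrt (Re (s1 f f)) * sqrt (Re (s2 g g))"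
    and ns1: "nonneg_form s1"
    using s1(1) unfolding Ml_def by blast
  have ss1: "sesquilinear s1" using ns1 nonneg_sesq by blast
  have w0: "w f f = 0" using f unfolding form_ker_def by blast
  have "(\<lambda>k::nat. s1 f f) \<longlonglongrightarrow> 0"
    using s1(2) unfolding abs_continuous_def
    apply (elim allE[of _ "\<lambda>k. f"])
    using w0 by (simp add: sesq_zero[OF ss1])
  then have "s1 f f = 0" by (simp add: LIMSEQ_const_iff)
  then have "norm (t f g) \<le> 0" for g using s2 by (metis mult_zero_left real_sqrt_zero zero_complex.simps(1))
  then show "f \<in> form_ker t" unfolding form_ker_def by simp
qed

lemma c_imp_a:
  assumes "form_ker w \<subseteq> form_ker t" "sesquilinear t" "nonneg_form w"
  shows "left_bounded t w"
proof -
  obtain m where m: "m > 0" "\<And>f. \<exists>a\<in>form_ker w. m * (norm (f - a))^2 \<le> Re (w f f)"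
    using coercive[OF assms(3)] by blast
  obtain K where K: "K > 0" "\<And>f g. norm (t f g) \<le> norm f * norm g * K"
    using sesq_bounded[OF assms(2)] by blast
  define C where "C = K^2 / m"
  have C0: "C > 0" using K m by (simp add: C_def)
  have sw: "sesquilinear w" using assms(3) nonneg_sesq by blast
  have nCw: "nonneg_form (\<lambda>f g. complex_of_real C * w f g)"
    using assms(3) C0 unfolding nonneg_form_def sesquilinear_def
    by (simp add: algebra_simps Reals_mult)
  have bnd: "norm (t f g) \<le> sqrt (Re (complex_of_real C * w f f)) * sqrt (Re (std g g))" for f g
  proof -
    obtain a where a: "a \<in> form_ker w" "m * (norm (f - a))^2 \<le> Re (w f f)" using m(2) by blast
    have "a \<in> form_ker t" using a assms(1) by blast
    then have "t a g = 0" unfolding form_ker_def by blast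
    then have "t f g = t (f - a) g" by (simp add: sesq_diff[OF assms(2)])
    then have n1: "norm (t f g) \<le> K * norm (f - a) * norm g" using K(2)[of "f - a" g] by (simp add: mult_ac)
    have "K * norm (f - a) = sqrt (C * (m * (norm (f - a))^2))"
      using K m by (simp add: C_def real_sqrt_mult)
    also have "\<dots> \<le> sqrt (C * Re (w f f))"
      using a(2) C0 by (simp add: mult_left_mono)
    finally have "K * norm (f - a) * norm g \<le> sqrt (C * Re (w f f)) * norm g"
      by (simp add: mult_right_mono)
    then show ?thesis using n1 by (simp add: std_Re)
  qed
  have "(\<lambda>f g. complex_of_real C * w f g) \<in> Ml t"
    unfolding Ml_def using nCw std_nonneg bnd by blast
  then show ?thesis unfolding left_bounded_def using C0 by blast
qed

lemma sing_if:
  assumes "{f + g | f g. f \<in> form_ker w \<and> g \<in> form_ker t} = UNIV" "sesquilinear t"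
  shows "left_strongly_singular t w"
proof -
  have "uform t \<in> Ml t"
    unfolding Ml_def using uform_nonneg[OF assms(2)] std_nonneg uform_bound[OF assms(2)] by blast
  moreover have "singular_form (uform t) w"
    unfolding singular_form_def
  proof
    fix f
    have "f \<in> {f + g | f g. f \<in> form_ker w \<and> g \<in> form_ker t}" using assms(1) by blast
    then obtain a b where ab: "f = a + b" "a \<in> form_ker w" "b \<in> form_ker t" by blast
    have "w a a = 0" using ab(2) unfolding form_ker_def by blast
    moreover have "uform t (f - a) (f - a) = 0" using ab(1,3) unfolding form_ker_def uform_def by simp
    ultimately show "\<exists>fs. (\<lambda>k. w (fs k) (fs k)) \<longlonglongrightarrow> 0 \<and> (\<lambda>k. uform t (f - fs k) (f - fs k)) \<longlonglongrightarrow> 0"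
      by (intro exI[of _ "\<lambda>k. a"]) simp
  qed
  ultimately show ?thesis unfolding left_strongly_singular_def by blast
qed

definition Tmap :: "'n::finite form \<Rightarrow> complex^'n \<Rightarrow> complex^'n" where
  "Tmap t h = (\<chi> j. t h (axis j 1))"

lemma Tmap_linear: assumes "sesquilinear t" shows "linear (Tmap t)"
  by (rule linearI) (simp_all add: Tmap_def vec_eq_iff sesq_add[OF assms] sesq_smult[OF assms] scaleR_vec_smult scaleR_conv_of_real)

lemma sing_only_if:
  assumes "left_strongly_singular t w" "sesquilinear t" "nonneg_form w"
  shows "{f + g | f g. f \<in> form_ker w \<and> g \<in> form_ker t} = UNIV"
proof -
  obtain s1 where s1: "s1 \<in> Ml t" "singular_form s1 w"
    using assms(1) unfolding left_strongly_singular_def by blast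
  obtain s2 where s2: "\<And>f g. norm (t f g) \<le> sqrt (Re (s1 f f)) * sqrt (Re (s2 g g))"
    using s1(1) unfolding Ml_def by blast
  obtain m where m: "m > 0" "\<And>f. \<exists>a\<in>form_ker w. m * (norm (f - a))^2 \<le> Re (w f f)"
    using coercive[OF assms(3)] by blast
  have sw: "sesquilinear w" using assms(3) nonneg_sesq by blast
  let ?N = "form_ker w"
  let ?T = "Tmap t"
  have lin: "linear ?T" using Tmap_linear[OF assms(2)] .
  have blin: "bounded_linear ?T" using lin linear_conv_bounded_linear by blast
  have clo: "closed (?T ` ?N)"
    by (intro closed_subspace linear_subspace_image lin ker_subspace sw)
  have "f \<in> {f + g | f g. f \<in> form_ker w \<and> g \<in> form_ker t}" for f
  proof -
    obtain fs where fs: "(\<lambda>k. w (fs k) (fs k)) \<longlonglongrightarrow> 0" "(\<lambda>k. s1 (f - fs k) (f - fs k)) \<longlonglongrightarrow> 0"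
      using s1(2) unfolding singular_form_def by blast
    have ex: "\<forall>k. \<exists>x. x \<in> ?N \<and> m * (norm (fs k - x))^2 \<le> Re (w (fs k) (fs k))"
      using m(2) by blast
    obtain a where a': "\<forall>k. a k \<in> ?N \<and> m * (norm (fs k - a k))^2 \<le> Re (w (fs k) (fs k))"
      using choice[OF ex] by blast
    then have a: "\<And>k. a k \<in> ?N" "\<And>k. m * (norm (fs k - a k))^2 \<le> Re (w (fs k) (fs k))"
      by blast+
    have "(\<lambda>k. fs k - a k) \<longlonglongrightarrow> 0"
    proof (rule Lim_null_comparison)
      show "\<forall>\<^sub>F k in sequentially. norm (fs k - a k) \<le> sqrt (Re (w (fs k) (fs k)) / m)"
      proof (intro always_eventually allI)
        fix k
        have "(norm (fs k - a k))^2 \<le> Re (w (fs k) (fs k)) / m" using a(2)[of k] m(1)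
          by (simp add: field_simps)
        then show "norm (fs k - a k) \<le> sqrt (Re (w (fs k) (fs k)) / m)"
          using real_le_rsqrt by blast
      qed
      show "(\<lambda>k. sqrt (Re (w (fs k) (fs k)) / m)) \<longlonglongrightarrow> 0"
      proof -
        have "(\<lambda>k. Re (w (fs k) (fs k))) \<longlonglongrightarrow> 0" using tendsto_Re[OF fs(1)] by simp
        then have "(\<lambda>k. Re (w (fs k) (fs k)) / m) \<longlonglongrightarrow> 0" by (rule tendsto_divide_zero)
        then show ?thesis using tendsto_real_sqrt by fastforce
      qed
    qed
    then have t1: "(\<lambda>k. ?T (fs k - a k)) \<longlonglongrightarrow> 0"
      using bounded_linear.tendsto_zero[OF blin] by blast
    have t2: "(\<lambda>k. ?T (f - fs k)) \<longlonglongrightarrow> 0"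
    proof (rule vec_tendstoI)
      fix j
      show "(\<lambda>k. ?T (f - fs k) $ j) \<longlonglongrightarrow> 0 $ j"
        unfolding Tmap_def vec_lambda_beta zero_index
      proof (rule Lim_null_comparison)
        show "\<forall>\<^sub>F k in sequentially. norm (t (f - fs k) (axis j 1)) \<le> sqrt (Re (s1 (f - fs k) (f - fs k))) * sqrt (Re (s2 (axis j 1) (axis j 1)))"
          using s2 by simp
        show "(\<lambda>k. sqrt (Re (s1 (f - fs k) (f - fs k))) * sqrt (Re (s2 (axis j 1) (axis j 1)))) \<longlonglongrightarrow> 0"
        proof -
          have "(\<lambda>k. Re (s1 (f - fs k) (f - fs k))) \<longlonglongrightarrow> 0" using tendsto_Re[OF fs(2)] by simp
          then have "(\<lambda>k. sqrt (Re (s1 (f - fs k) (f - fs k)))) \<longlonglongrightarrow> 0"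
            using tendsto_real_sqrt by fastforce
          then show ?thesis by (rule tendsto_mult_left_zero)
        qed
      qed
    qed
    have eq: "?T (a k) = ?T f - ?T (f - fs k) - ?T (fs k - a k)" for k
      by (simp add: linear_diff[OF lin] algebra_simps)
    have "(\<lambda>k. ?T (a k)) \<longlonglongrightarrow> ?T f"
      unfolding eq using tendsto_diff[OF tendsto_diff[OF tendsto_const t2] t1] by simp
    moreover have ev: "eventually (\<lambda>k. ?T (a k) \<in> ?T ` ?N) sequentially"
      by (intro always_eventually allI) (simp add: a(1))
    ultimately have "?T f \<in> ?T ` ?N"
      using Lim_in_closed_set[OF clo ev trivial_limit_sequentially] by blast
    then obtain a0 where a0: "a0 \<in> ?N" "?T f = ?T a0" by blast
    have "?T (f - a0) = 0" using a0(2) linear_diff[OF lin] by simp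
    then have "\<And>j. t (f - a0) (axis j 1) = 0" unfolding Tmap_def vec_eq_iff by simp
    then have "f - a0 \<in> form_ker t" unfolding form_ker_def
      by (subst sesq_expand_right[OF assms(2)]) simp
    then show ?thesis using a0(1) by (intro CollectI exI[of _ a0] exI[of _ "f - a0"]) simp
  qed
  then show ?thesis by blast
qed

theorem mainTheorem2:
  fixes t w :: "complex ^ 'n::finite \<Rightarrow> complex ^ 'n \<Rightarrow> complex"
  assumes "sesquilinear t" and "sesquilinear w" and "nonneg_form w"
  shows "(left_bounded t w \<longleftrightarrow> left_regular t w)
       \<and> (left_regular t w \<longleftrightarrow> form_ker w \<subseteq> form_ker t)
       \<and> (left_strongly_singular t w \<longleftrightarrow>
            {f + g | f g. f \<in> form_ker w \<and> g \<in> form_ker t} = UNIV)"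
proof (intro conjI iffI)
  show "left_regular t w" if "left_bounded t w" using a_imp_b[OF that] .
  show "left_bounded t w" if "left_regular t w"
    using c_imp_a[OF b_imp_c[OF that assms(1,3)] assms(1,3)] .
  show "form_ker w \<subseteq> form_ker t" if "left_regular t w" using b_imp_c[OF that assms(1,3)] .
  show "left_regular t w" if "form_ker w \<subseteq> form_ker t"
    using a_imp_b[OF c_imp_a[OF that assms(1,3)]] .
  show "{f + g | f g. f \<in> form_ker w \<and> g \<in> form_ker t} = UNIV" if "left_strongly_singular t w"
    using sing_only_if[OF that assms(1,3)] .
  show "left_strongly_singular t w" if "{f + g | f g. f \<in> form_ker w \<and> g \<in> form_ker t} = UNIV"
    using sing_if[OF that assms(1)] .
qed

end
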